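(* (i) Every $\mathcal H$-convex function $f:\mathbb R\to\mathbb R_{+\infty}$ is even and lower semicontinuous. (ii) If $C\subset\mathcal H$ is $\mathcal H$-convex and $A\subset\mathbb R^2$ satisfies $C=\{\psi_{a,b}:(a,b)\in A\}$, then $A$ is closed and convex and $A-\mathbb R^2_+\subset A$. (iii) If $A\subset\mathbb R^2$ is closed and convex, $A-\mathbb R^2_+\subset A$, and the function $\sup_{(a,b)\in A}\psi_{a,b}$ is not identically $+\infty$ on $\mathbb R$, then $C=\{\psi_{a,b}:(a,b)\in A\}$ is $\mathcal H$-convex.
   Context: $X=\mathbb R$; $\mathbb R_{+\infty}=\mathbb R\cup\{+\infty\}$. For $a,b\in\mathbb R$, $\phi_a(x)=ax^2$, $\psi_{a,b}(x)=ax^2+b$; $\mathcal L=\{\phi_a:a\in\mathbb R\}$, $\mathcal H=\{\psi_{a,b}:a,b\in\mathbb R\}$. A function $f$ is $\mathcal H$-convex if $f=\sup_{h\in H}h$ pointwise for some $H\subset\mathcal H$. A subset $C\subset\mathcal H$ is $\mathcal H$-convex if for every $h_0\in\mathcal H\setminus C$ there is $x\in\mathbb R$ with $h_0(x)>\sup_{h\in C}h(x)$. $\mathbb R^2_+=\{(a,b):a\ge0,b\ge0\}$ and $A-B=\{u-v:u\in A,v\in B\}$. *)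

theory Defs
  imports "HOL-Analysis.Analysis" "HOL-Library.Extended_Real"
begin

definition psi :: "real \<Rightarrow> real \<Rightarrow> real \<Rightarrow> real" where
  "psi a b = (\<lambda>x. a * x\<^sup>2 + b)"

definition HH :: "(real \<Rightarrow> real) set" where
  "HH = {psi a b | a b. True}"

definition supfun :: "(real \<Rightarrow> real) set \<Rightarrow> real \<Rightarrow> ereal" where
  "supfun H x = (SUP h\<in>H. ereal (h x))"

definition H_convex_fun :: "(real \<Rightarrow> ereal) \<Rightarrow> bool" where
  "H_convex_fun f \<longleftrightarrow> (\<exists>H. H \<subseteq> HH \<and> f = supfun H)"

definition H_convex_set :: "(real \<Rightarrow> real) set \<Rightarrow> bool" where
  "H_convex_set C \<longleftrightarrow> C \<subseteq> HH \<and> (\<forall>h0 \<in> HH - C. \<exists>x. ereal (h0 x) > supfun C x)"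

definition lsc :: "(real \<Rightarrow> ereal) \<Rightarrow> bool" where
  "lsc f \<longleftrightarrow> (\<forall>x. f x \<le> Liminf (at x) f)"

definition nonneg_quadrant :: "(real \<times> real) set" where
  "nonneg_quadrant = {(a, b). a \<ge> 0 \<and> b \<ge> 0}"

definition set_diff_minkowski :: "(real \<times> real) set \<Rightarrow> (real \<times> real) set \<Rightarrow> (real \<times> real) set" where
  "set_diff_minkowski A B = {u - v | u v. u \<in> A \<and> v \<in> B}"

end

theory Submission
  imports Defs
begin

lemma psi_app[simp]: "psi a b x = a * x\<^sup>2 + b"
  by (simp add: psi_def)

lemma psi_inj: "psi a b = psi c d \<Longrightarrow> a = c \<and> b = d"
proof -
  assume h: "psi a b = psi c d"
  have "psi a b 0 = psi c d 0" "psi a b 1 = psi c d 1" using h by auto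
  thus ?thesis by simp
qed

lemma mem_psiset: "psi a b \<in> {psi a b | a b. (a, b) \<in> A} \<longleftrightarrow> (a, b) \<in> A"
  using psi_inj by blast

lemma UB: "(a, b) \<in> A \<Longrightarrow> ereal (a * x\<^sup>2 + b) \<le> supfun {psi a b | a b. (a, b) \<in> A} x"
  unfolding supfun_def by (rule SUP_upper2[where i="psi a b"]) auto

lemma LB: "(\<And>a b. (a, b) \<in> A \<Longrightarrow> a * x\<^sup>2 + b \<le> c) \<Longrightarrow> supfun {psi a b | a b. (a, b) \<in> A} x \<le> ereal c"
  unfolding supfun_def by (rule SUP_least) auto

lemma empty_sup: "supfun {} x = -\<infinity>"
  by (simp add: supfun_def bot_ereal_def)

lemma part1:
  assumes "H_convex_fun f"
  shows "(\<forall>x. f (-x) = f x) \<and> lsc f"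
proof -
  obtain H where H: "H \<subseteq> HH" "f = supfun H" using assms H_convex_fun_def by auto
  have ev: "h (-x) = h x" if "h \<in> H" for h x
    using H(1) that unfolding HH_def by auto
  have "f (-x) = f x" for x
    unfolding H(2) supfun_def using ev by (intro SUP_cong) auto
  moreover have "lsc f"
    unfolding lsc_def
  proof
    fix x
    show "f x \<le> Liminf (at x) f"
      unfolding H(2) supfun_def
    proof (rule SUP_least)
      fix h assume hH: "h \<in> H"
      then obtain a b where hab: "h = psi a b" using H(1) unfolding HH_def by auto
      have tl: "((\<lambda>y. ereal (h y)) \<longlongrightarrow> ereal (h x)) (at x)"
      proof -
        have "((\<lambda>y. a * y\<^sup>2 + b) \<longlongrightarrow> a * x\<^sup>2 + b) (at x)"
          by (intro tendsto_intros)
        hence "(h \<longlongrightarrow> h x) (at x)" unfolding hab psi_def by simp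
        thus ?thesis by (rule tendsto_ereal)
      qed
      have "ereal (h x) = Liminf (at x) (\<lambda>y. ereal (h y))"
        by (rule lim_imp_Liminf[symmetric, OF _ tl]) simp
      also have "\<dots> \<le> Liminf (at x) (supfun H)"
        by (rule Liminf_mono, rule always_eventually) (auto simp: supfun_def intro!: SUP_upper hH)
      finally have fin: "ereal (h x) \<le> Liminf (at x) (supfun H)" .
      have e: "supfun H = (\<lambda>y. SUP h\<in>H. ereal (h y))" by (rule ext) (simp add: supfun_def)
      show "ereal (h x) \<le> Liminf (at x) (\<lambda>y. SUP h\<in>H. ereal (h y))"
        using fin by (simp only: e)
    qed
  qed
  ultimately show ?thesis by blast
qed

lemma part2:
  assumes hc: "H_convex_set {psi a b | a b. (a, b) \<in> A}"
  shows "closed A \<and> convex A \<and> set_diff_minkowski A nonneg_quadrant \<subseteq> A"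
proof -
  define C where "C = {psi a b | a b. (a, b) \<in> A}"
  have K: "\<exists>x. ereal (a * x\<^sup>2 + b) > supfun C x" if "(a, b) \<notin> A" for a b
  proof -
    have "psi a b \<in> HH - C" using that mem_psiset[of a b A] unfolding C_def HH_def by auto
    then obtain x where "ereal (psi a b x) > supfun C x"
      using hc unfolding H_convex_set_def C_def by blast
    thus ?thesis by auto
  qed
  have U: "ereal (a * x\<^sup>2 + b) \<le> supfun C x" if "(a, b) \<in> A" for a b x
    using UB[OF that] unfolding C_def .
  have cl: "closed A"
    unfolding closed_def open_subopen[of "- A"]
  proof
    fix p assume "p \<in> - A"
    then obtain a b where p: "p = (a, b)" "(a, b) \<notin> A" by (cases p) auto
    then obtain x where x: "ereal (a * x\<^sup>2 + b) > supfun C x" using K by blast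
    define T where "T = {q :: real \<times> real. supfun C x < ereal (fst q * x\<^sup>2 + snd q)}"
    have "open T" unfolding T_def
      by (intro open_Collect_less continuous_intros)
    moreover have "p \<in> T" using p x T_def by simp
    moreover have "T \<subseteq> - A"
    proof
      fix q assume "q \<in> T"
      then obtain c d where q: "q = (c, d)" "supfun C x < ereal (c * x\<^sup>2 + d)" 
        unfolding T_def by (cases q) auto
      show "q \<in> - A"
      proof
        assume "q \<in> A" thus False using U[of c d x] q by auto
      qed
    qed
    ultimately show "\<exists>T. open T \<and> p \<in> T \<and> T \<subseteq> - A" by blast
  qed
  have cv: "convex A"
    unfolding convex_def
  proof (intro ballI allI impI)
    fix p q :: "real \<times> real" and u v :: real
    assume pq: "p \<in> A" "q \<in> A" and uv: "0 \<le> u" "0 \<le> v" "u + v = 1"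
    obtain a1 b1 where p: "p = (a1, b1)" by (cases p)
    obtain a2 b2 where q: "q = (a2, b2)" by (cases q)
    show "u *\<^sub>R p + v *\<^sub>R q \<in> A"
    proof (rule ccontr)
      assume "u *\<^sub>R p + v *\<^sub>R q \<notin> A"
      hence "(u * a1 + v * a2, u * b1 + v * b2) \<notin> A" using p q by simp
      then obtain x where x: "ereal ((u * a1 + v * a2) * x\<^sup>2 + (u * b1 + v * b2)) > supfun C x"
        using K by blast
      have 1: "ereal (a1 * x\<^sup>2 + b1) \<le> supfun C x" using U pq p by blast
      have 2: "ereal (a2 * x\<^sup>2 + b2) \<le> supfun C x" using U pq q by blast
      have r1: "a1 * x\<^sup>2 + b1 < (u * a1 + v * a2) * x\<^sup>2 + (u * b1 + v * b2)"
        using 1 x by (metis ereal_less(2) order_le_less_trans less_ereal.simps(1))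
      have r2: "a2 * x\<^sup>2 + b2 < (u * a1 + v * a2) * x\<^sup>2 + (u * b1 + v * b2)"
        using 2 x by (metis order_le_less_trans less_ereal.simps(1))
      have e: "(u * a1 + v * a2) * x\<^sup>2 + (u * b1 + v * b2) = u * (a1 * x\<^sup>2 + b1) + v * (a2 * x\<^sup>2 + b2)"
        by (simp add: algebra_simps)
      have "u * (a1 * x\<^sup>2 + b1) + v * (a2 * x\<^sup>2 + b2) < u * ((u * a1 + v * a2) * x\<^sup>2 + (u * b1 + v * b2)) + v * ((u * a1 + v * a2) * x\<^sup>2 + (u * b1 + v * b2))"
      proof (cases "u = 0")
        case True thus ?thesis using r2 uv by simp
      next
        case False
        hence "u * (a1 * x\<^sup>2 + b1) < u * ((u * a1 + v * a2) * x\<^sup>2 + (u * b1 + v * b2))"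
          using r1 uv by simp
        moreover have "v * (a2 * x\<^sup>2 + b2) \<le> v * ((u * a1 + v * a2) * x\<^sup>2 + (u * b1 + v * b2))"
          using r2 uv by (simp add: mult_left_mono)
        ultimately show ?thesis by linarith
      qed
      also have "\<dots> = (u * a1 + v * a2) * x\<^sup>2 + (u * b1 + v * b2)"
        using uv by (metis distrib_right mult_1)
      finally show False using e by simp
    qed
  qed
  have mk: "set_diff_minkowski A nonneg_quadrant \<subseteq> A"
  proof
    fix p assume "p \<in> set_diff_minkowski A nonneg_quadrant"
    then obtain a b c d where p: "p = (a - c, b - d)" "(a, b) \<in> A" "c \<ge> 0" "d \<ge> 0"
      unfolding set_diff_minkowski_def nonneg_quadrant_def by auto
    show "p \<in> A"
    proof (rule ccontr)
      assume "p \<notin> A"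
      then obtain x where x: "ereal ((a - c) * x\<^sup>2 + (b - d)) > supfun C x" using K p by blast
      have "ereal (a * x\<^sup>2 + b) \<le> supfun C x" using U p by blast
      hence "a * x\<^sup>2 + b < (a - c) * x\<^sup>2 + (b - d)" using x
        by (metis order_le_less_trans less_ereal.simps(1))
      moreover have "c * x\<^sup>2 \<ge> 0" using p by simp
      ultimately show False using p by (simp add: algebra_simps)
    qed
  qed
  show ?thesis using cl cv mk by blast
qed

lemma part3:
  assumes cl: "closed A" and cv: "convex A" and mk: "set_diff_minkowski A nonneg_quadrant \<subseteq> A"
    and fin: "\<exists>x. supfun {psi a b | a b. (a, b) \<in> A} x \<noteq> \<infinity>"
  shows "H_convex_set {psi a b | a b. (a, b) \<in> A}"
proof -
  define C where "C = {psi a b | a b. (a, b) \<in> A}"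
  have dn: "(a - c, b - d) \<in> A" if "(a, b) \<in> A" "c \<ge> 0" "d \<ge> 0" for a b c d
  proof -
    have "(a, b) - (c, d) \<in> set_diff_minkowski A nonneg_quadrant"
      unfolding set_diff_minkowski_def nonneg_quadrant_def using that by blast
    thus ?thesis using mk by auto
  qed
  have main: "\<exists>x. ereal (a0 * x\<^sup>2 + b0) > supfun C x" if nA: "(a0, b0) \<notin> A" for a0 b0
  proof (cases "A = {}")
    case True
    hence "C = {}" unfolding C_def by auto
    thus ?thesis by (simp add: empty_sup)
  next
    case False
    then obtain a1 b1 where ab1: "(a1, b1) \<in> A" by auto
    obtain w \<beta> where sep: "inner w (a0, b0) < \<beta>" "\<forall>p\<in>A. inner w p > \<beta>"
      using separating_hyperplane_closed_point[OF cv cl nA] by blast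
    obtain u v where w: "w = (-u, -v)" 
    proof
      show "w = (- (- fst w), - (- snd w))" by simp
    qed
    have s0: "u * a0 + v * b0 > -\<beta>" using sep w by simp
    have s1: "u * a + v * b < -\<beta>" if "(a, b) \<in> A" for a b using sep(2) that w by force
    have u0: "u \<ge> 0"
    proof (rule ccontr)
      assume "\<not> u \<ge> 0"
      define c where "c = (\<bar>\<beta>\<bar> + \<bar>u * a1 + v * b1\<bar> + 1) / (-u)"
      have c0: "c \<ge> 0" unfolding c_def by (rule divide_nonneg_pos) (use \<open>\<not> u \<ge> 0\<close> in auto)
      have "u * c = -(\<bar>\<beta>\<bar> + \<bar>u * a1 + v * b1\<bar> + 1)" using \<open>\<not> u \<ge> 0\<close> unfolding c_def by simp
      moreover have "u * (a1 - c) + v * b1 < -\<beta>" using s1[OF dn[OF ab1 c0, of 0]] by simp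
      ultimately show False by (simp add: algebra_simps)
    qed
    have v0: "v \<ge> 0"
    proof (rule ccontr)
      assume "\<not> v \<ge> 0"
      define d where "d = (\<bar>\<beta>\<bar> + \<bar>u * a1 + v * b1\<bar> + 1) / (-v)"
      have d0: "d \<ge> 0" unfolding d_def by (rule divide_nonneg_pos) (use \<open>\<not> v \<ge> 0\<close> in auto)
      have "v * d = -(\<bar>\<beta>\<bar> + \<bar>u * a1 + v * b1\<bar> + 1)" using \<open>\<not> v \<ge> 0\<close> unfolding d_def by simp
      moreover have "u * a1 + v * (b1 - d) < -\<beta>" using s1[OF dn[OF ab1 order_refl d0]] by simp
      ultimately show False by (simp add: algebra_simps)
    qed
    show ?thesis
    proof (cases "v > 0")
      case True
      define t where "t = u / v"
      have t0: "t \<ge> 0" using u0 True unfolding t_def by simp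
      define x where "x = sqrt t"
      have xt: "x\<^sup>2 = t" using t0 unfolding x_def by simp
      have "supfun C x \<le> ereal (-\<beta> / v)"
        unfolding C_def
      proof (rule LB)
        fix a b assume "(a, b) \<in> A"
        hence "u * a + v * b < -\<beta>" by (rule s1)
        hence "(u * a + v * b) / v < -\<beta> / v" by (rule divide_strict_right_mono[OF _ True])
        moreover have "(u * a + v * b) / v = a * x\<^sup>2 + b" using True unfolding xt t_def
          by (simp add: field_simps)
        ultimately show "a * x\<^sup>2 + b \<le> -\<beta> / v" by simp
      qed
      also have "-\<beta> / v < a0 * x\<^sup>2 + b0"
      proof -
        have "-\<beta> / v < (u * a0 + v * b0) / v" by (rule divide_strict_right_mono[OF s0 True])
        moreover have "(u * a0 + v * b0) / v = a0 * x\<^sup>2 + b0" using True unfolding xt t_def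
          by (simp add: field_simps)
        ultimately show ?thesis by simp
      qed
      hence "ereal (-\<beta> / v) < ereal (a0 * x\<^sup>2 + b0)" by simp
      finally show ?thesis by blast
    next
      case False
      hence v: "v = 0" using v0 by simp
      have upos: "u > 0" using s0 s1[OF ab1] v u0 by (cases "u = 0") auto
      define s where "s = -\<beta> / u"
      have as: "a < s" if "(a, b) \<in> A" for a b
        using s1[OF that] v upos unfolding s_def by (simp add: field_simps)
      have a0s: "s < a0" using s0 v upos unfolding s_def by (simp add: field_simps)
      obtain x1 where x1: "supfun C x1 \<noteq> \<infinity>" using fin unfolding C_def by blast
      have "supfun C x1 \<ge> ereal (a1 * x1\<^sup>2 + b1)" using UB[OF ab1] unfolding C_def .
      then obtain M where M: "supfun C x1 = ereal M" using x1 by (cases "supfun C x1") auto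
      have Mb: "a * x1\<^sup>2 + b \<le> M" if "(a, b) \<in> A" for a b
        using UB[OF that, of x1] M unfolding C_def by simp
      define t1 where "t1 = x1\<^sup>2"
      define \<delta> where "\<delta> = a0 - s"
      have dpos: "\<delta> > 0" using a0s unfolding \<delta>_def by simp
      define t where "t = t1 + (\<bar>M - a0 * t1 - b0\<bar> + 1) / \<delta>"
      have tt1: "t - t1 = (\<bar>M - a0 * t1 - b0\<bar> + 1) / \<delta>" unfolding t_def by simp
      have tge: "t \<ge> t1" using dpos unfolding t_def by simp
      have t0: "t \<ge> 0" using tge unfolding t1_def by (meson order_trans zero_le_power2)
      define x where "x = sqrt t"
      have xt: "x\<^sup>2 = t" using t0 unfolding x_def by simp
      have key: "\<delta> * (t - t1) = \<bar>M - a0 * t1 - b0\<bar> + 1" using dpos unfolding tt1 by simp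
      have "supfun C x \<le> ereal (s * (t - t1) + M)"
        unfolding C_def
      proof (rule LB)
        fix a b assume ab: "(a, b) \<in> A"
        have "a * (t - t1) \<le> s * (t - t1)" using as[OF ab] tge by (simp add: mult_right_mono)
        moreover have "a * t1 + b \<le> M" using Mb[OF ab] unfolding t1_def .
        ultimately show "a * x\<^sup>2 + b \<le> s * (t - t1) + M" unfolding xt by (simp add: algebra_simps)
      qed
      also have "s * (t - t1) + M < a0 * x\<^sup>2 + b0"
      proof -
        have "a0 * t + b0 - (s * (t - t1) + M) = \<delta> * (t - t1) + (a0 * t1 + b0 - M)"
          unfolding \<delta>_def by (simp add: algebra_simps)
        also have "\<dots> > 0" unfolding key by linarith
        finally show ?thesis unfolding xt by simp
      qed
      hence "ereal (s * (t - t1) + M) < ereal (a0 * x\<^sup>2 + b0)" by simp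
      finally show ?thesis by blast
    qed
  qed
  show ?thesis
    unfolding H_convex_set_def
  proof (intro conjI ballI)
    show "{psi a b | a b. (a, b) \<in> A} \<subseteq> HH" unfolding HH_def by blast
  next
    fix h0 assume "h0 \<in> HH - {psi a b | a b. (a, b) \<in> A}"
    then obtain a0 b0 where h0: "h0 = psi a0 b0" "(a0, b0) \<notin> A"
      unfolding HH_def by auto
    from main[OF h0(2)] show "\<exists>x. ereal (h0 x) > supfun {psi a b | a b. (a, b) \<in> A} x"
      unfolding h0 C_def by simp
  qed
qed

theorem mainTheorem13:
  shows "(\<forall>f :: real \<Rightarrow> ereal. (\<forall>x. f x \<noteq> -\<infinity>) \<and> H_convex_fun f \<longrightarrow>
            (\<forall>x. f (-x) = f x) \<and> lsc f)
      \<and> (\<forall>(C :: (real \<Rightarrow> real) set) (A :: (real \<times> real) set).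
            H_convex_set C \<and> C = {psi a b | a b. (a, b) \<in> A} \<longrightarrow>
            closed A \<and> convex A \<and> set_diff_minkowski A nonneg_quadrant \<subseteq> A)
      \<and> (\<forall>A :: (real \<times> real) set.
            closed A \<and> convex A \<and> set_diff_minkowski A nonneg_quadrant \<subseteq> A \<and>
            (\<exists>x. supfun {psi a b | a b. (a, b) \<in> A} x \<noteq> \<infinity>) \<longrightarrow>
            H_convex_set {psi a b | a b. (a, b) \<in> A})"
  using part1 part2 part3 by blast

end
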